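(* With $\delta=\sum_{k=1}^m t_k\partial_{t_k}$, the recurrence coefficients satisfy the Toda-type equations \[ \delta\ln\beta_n=\alpha_{n-1}-\alpha_n+2,\qquad (\delta-1)\alpha_n=\beta_n-\beta_{n+1}. \]
   Context: Let $m\ge1$, $\alpha>-1$, $0<t_1<\dots<t_m$, real $\omega_0,\dots,\omega_m$ with $\sum_{k=0}^\ell\omega_k\ge0$ for $\ell=0,\dots,m$, $\theta$ the Heaviside function, $w(x;\vec t)=x^\alpha e^{-x}\big(\omega_0+\sum_k\omega_k\theta(x-t_k)\big)$ on $[0,\infty)$, $P_n$ the monic orthogonal polynomials w.r.t. $w$, and $\alpha_n(\vec t),\beta_n(\vec t)$ the coefficients of the recurrence $xP_n=P_{n+1}+\alpha_nP_n+\beta_nP_{n-1}$. *)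

theory Defs
  imports "HOL-Analysis.Analysis" "HOL-Computational_Algebra.Polynomial"
begin

text \<open>Heaviside step function (value at 0 is irrelevant: a null set).\<close>
definition heaviside :: "real \<Rightarrow> real" where
  "heaviside y = (if 0 < y then 1 else 0)"

definition lweight :: "real \<Rightarrow> (nat \<Rightarrow> real) \<Rightarrow> nat \<Rightarrow> (nat \<Rightarrow> real) \<Rightarrow> real \<Rightarrow> real" where
  "lweight a \<omega> m t x =
     x powr a * exp (- x) * (\<omega> 0 + (\<Sum>k=1..m. \<omega> k * heaviside (x - t k)))"

definition is_monic_OP :: "(real \<Rightarrow> real) \<Rightarrow> nat \<Rightarrow> real poly \<Rightarrow> bool" where
  "is_monic_OP w n p \<longleftrightarrow>
     degree p = n \<and> lead_coeff p = 1 \<and>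
     (\<forall>j<n. (LINT x:{0<..}|lborel. x ^ j * poly p x * w x) = 0)"

definition monicOP :: "(real \<Rightarrow> real) \<Rightarrow> nat \<Rightarrow> real poly" where
  "monicOP w n = (THE p. is_monic_OP w n p)"

definition prevOP :: "(real \<Rightarrow> real) \<Rightarrow> nat \<Rightarrow> real poly" where
  "prevOP w n = (if n = 0 then 0 else monicOP w (n - 1))"

text \<open>Recurrence coefficients: x P_n = P_{n+1} + alpha_n P_n + beta_n P_{n-1}.
  For n = 0 the coefficient beta_0 is not determined by the recurrence; we use the
  standard convention beta_0 = 0.\<close>
definition rec_alpha :: "(real \<Rightarrow> real) \<Rightarrow> nat \<Rightarrow> real" where
  "rec_alpha w n = (THE a. \<exists>b. [:0, 1:] * monicOP w n =
       monicOP w (Suc n) + smult a (monicOP w n) + smult b (prevOP w n))"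

definition rec_beta :: "(real \<Rightarrow> real) \<Rightarrow> nat \<Rightarrow> real" where
  "rec_beta w n = (if n = 0 then 0 else (THE b. \<exists>a. [:0, 1:] * monicOP w n =
       monicOP w (Suc n) + smult a (monicOP w n) + smult b (prevOP w n)))"

end

theory Submission
  imports Defs "HOL-Real_Asymp.Real_Asymp"
begin


definition dlt :: "real poly \<Rightarrow> nat \<Rightarrow> bool" where
  "dlt r n \<longleftrightarrow> (\<forall>i\<ge>n. coeff r i = 0)"

lemma dlt_0[simp]: "dlt 0 n" by (simp add: dlt_def)
lemma dlt_mono: "dlt r n \<Longrightarrow> n \<le> k \<Longrightarrow> dlt r k" by (auto simp: dlt_def)
lemma dlt_add: "dlt r n \<Longrightarrow> dlt s n \<Longrightarrow> dlt (r + s) n" by (auto simp: dlt_def)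
lemma dlt_diff: "dlt r n \<Longrightarrow> dlt s n \<Longrightarrow> dlt (r - s) n" by (auto simp: dlt_def)
lemma dlt_smult: "dlt r n \<Longrightarrow> dlt (smult c r) n" by (auto simp: dlt_def)
lemma dlt_iff_degree: "dlt r n \<longleftrightarrow> (r = 0 \<or> degree r < n)"
proof
  assume "dlt r n"
  then show "r = 0 \<or> degree r < n"
    unfolding dlt_def by (metis leading_coeff_0_iff not_le)
next
  assume "r = 0 \<or> degree r < n"
  then show "dlt r n" unfolding dlt_def by (auto intro: coeff_eq_0)
qed
lemma dlt_x: "dlt r n \<Longrightarrow> dlt ([:0,1:] * r) (Suc n)"
  by (auto simp: dlt_def coeff_pCons split: nat.splits)
lemma dlt_const: "dlt [:c:] 1" by (auto simp: dlt_def coeff_pCons split: nat.splits)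

locale linf =
  fixes L :: "real poly \<Rightarrow> real"
  assumes L_add: "L (p + q) = L p + L q"
      and L_smult: "L (smult c p) = c * L p"
begin
lemma L_zero[simp]: "L 0 = 0" using L_smult[of 0 0] by simp
lemma L_minus[simp]: "L (- p) = - L p" using L_smult[of "-1" p] by simp
lemma L_diff[simp]: "L (p - q) = L p - L q" using L_add[of p "-q"] by simp
lemma L_sum: "L (\<Sum>i\<in>A. f i) = (\<Sum>i\<in>A. L (f i))"
  by (induction A rule: infinite_finite_induct) (auto simp: L_add)
lemmas L_simps[simp] = L_add L_smult
end

definition xp :: "real poly" where "xp = [:0,1:]"
lemma dlt_xp: "dlt r n \<Longrightarrow> dlt (xp * r) (Suc n)"
  unfolding xp_def dlt_def by (auto simp: coeff_pCons split: nat.splits)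

fun OPpair :: "(real poly \<Rightarrow> real) \<Rightarrow> nat \<Rightarrow> real poly \<times> real poly" where
  "OPpair L 0 = (1, 0)"
| "OPpair L (Suc n) = (case OPpair L n of (p, q) \<Rightarrow>
     ([:- (L (xp * p * p) / L (p * p)), 1:] * p
        - smult (if n = 0 then 0 else L (p * p) / L (q * q)) q, p))"

definition OP where "OP L n = fst (OPpair L n)"
definition OPm where "OPm L n = snd (OPpair L n)"
definition hh where "hh L n = L (OP L n * OP L n)"
definition aa where "aa L n = L (xp * OP L n * OP L n) / hh L n"
definition bb where "bb L n = (if n = 0 then 0 else hh L n / hh L (n - 1))"

lemma OP_0[simp]: "OP L 0 = 1" by (simp add: OP_def)
lemma OPm_0[simp]: "OPm L 0 = 0" by (simp add: OPm_def)
lemma OPm_Suc[simp]: "OPm L (Suc n) = OP L n"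
  by (simp add: OPm_def OP_def split: prod.splits)
lemma OPm_eq: "n \<noteq> 0 \<Longrightarrow> OPm L n = OP L (n - 1)"
  by (cases n) auto
lemma OP_Suc: "OP L (Suc n) = [:- aa L n, 1:] * OP L n - smult (bb L n) (OPm L n)"
  by (cases n) (simp_all add: OP_def OPm_def aa_def bb_def hh_def split: prod.splits)

lemma OP_coeff: "coeff (OP L n) n = 1 \<and> dlt (OP L n) (Suc n) \<and> dlt (OPm L n) n"
proof (induction n)
  case 0 then show ?case by (simp add: dlt_def coeff_1 )
next
  case (Suc n)
  have d1: "dlt (OPm L n) (Suc (Suc n))" using Suc dlt_mono[of "OPm L n" n "Suc (Suc n)"] by simp
  have e: "[:- aa L n, 1:] * OP L n = smult (- aa L n) (OP L n) + xp * OP L n"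
    by (simp add: xp_def algebra_simps)
  have f1: "dlt (xp * OP L n) (Suc (Suc n))" using Suc dlt_xp by blast
  have f2: "dlt (smult (- aa L n) (OP L n)) (Suc (Suc n))"
    using Suc dlt_mono[of "OP L n" "Suc n" "Suc (Suc n)"] by (intro dlt_smult) simp
  have f3: "coeff (xp * OP L n) (Suc n) = 1" using Suc by (simp add: xp_def coeff_pCons)
  have f4: "coeff (OP L n) (Suc n) = 0" "coeff (OPm L n) (Suc n) = 0"
    using Suc by (auto simp: dlt_def)
  have "coeff (OP L (Suc n)) (Suc n) = 1" unfolding OP_Suc e using f3 f4 by simp
  moreover have "dlt (OP L (Suc n)) (Suc (Suc n))" unfolding OP_Suc e
    by (intro dlt_diff dlt_add dlt_smult f1 f2 d1)
  ultimately show ?case using Suc by simp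
qed

lemma OP_lead: "coeff (OP L n) n = 1" using OP_coeff by blast
lemma OP_dlt: "dlt (OP L n) (Suc n)" using OP_coeff by blast
lemma OPm_dlt: "dlt (OPm L n) n" using OP_coeff by blast
lemma OP_degree: "degree (OP L n) = n"
proof -
  have "OP L n \<noteq> 0" using OP_lead[of L n] by auto
  then have "degree (OP L n) \<le> n" using OP_dlt[of L n] unfolding dlt_iff_degree by simp
  moreover have "n \<le> degree (OP L n)" using OP_lead[of L n] by (intro le_degree) simp
  ultimately show ?thesis by simp
qed
lemma OP_nz: "OP L n \<noteq> 0" using OP_lead[of L n] by auto


lemma dlt_decomp: "dlt r (Suc n) \<Longrightarrow> dlt (r - smult (coeff r n) (OP L n)) n"
  using OP_lead[of L n] OP_dlt[of L n] unfolding dlt_def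
  by (metis coeff_diff coeff_smult diff_self le_eq_less_or_eq mult_1_right mult_zero_right Suc_le_eq)

lemma xOP_decomp: "dlt (xp * OP L n - OP L (Suc n)) (Suc n)"
proof -
  have "OP L (Suc n) = smult (- aa L n) (OP L n) + xp * OP L n - smult (bb L n) (OPm L n)"
    by (simp add: OP_Suc xp_def algebra_simps)
  then have "xp * OP L n - OP L (Suc n) = smult (aa L n) (OP L n) + smult (bb L n) (OPm L n)"
    by (simp add: algebra_simps)
  then show ?thesis using OP_dlt[of L n] OPm_dlt[of L n] dlt_mono[of "OPm L n" n "Suc n"]
    by (simp add: dlt_add dlt_smult)
qed

locale pdf = linf +
  assumes pos: "p \<noteq> 0 \<Longrightarrow> L (p * p) > 0"
begin

lemma hh_pos: "hh L n > 0" unfolding hh_def using pos OP_nz by blast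

lemma orth_all: "\<forall>k\<le>n. \<forall>r. dlt r k \<longrightarrow> L (r * OP L k) = 0"
proof (induction n)
  case 0
  then show ?case by (simp add: dlt_iff_degree)
next
  case (Suc n)
  have IH: "\<And>k r. k \<le> n \<Longrightarrow> dlt r k \<Longrightarrow> L (r * OP L k) = 0" using Suc by blast
  let ?P = "OP L n" and ?Q = "OPm L n" and ?a = "aa L n" and ?b = "bb L n"
  have PS: "OP L (Suc n) = xp * ?P - smult ?a ?P - smult ?b ?Q"
    by (simp add: OP_Suc xp_def algebra_simps)
  have h: "hh L n > 0" by (rule hh_pos)
  have LPQ: "L (?P * ?Q) = 0"
    using IH[of n ?Q] OPm_dlt[of L n] by (simp add: mult.commute)
  have A: "L (?P * OP L (Suc n)) = 0"
  proof -
    have "L (?P * OP L (Suc n)) = L (xp * ?P * ?P) - ?a * hh L n - ?b * L (?P * ?Q)"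
      unfolding PS by (simp add: algebra_simps hh_def)
    also have "?a * hh L n = L (xp * ?P * ?P)" using h by (simp add: aa_def)
    finally show ?thesis using LPQ by simp
  qed
  have B: "L (r' * OP L (Suc n)) = 0" if r': "dlt r' n" for r'
  proof (cases n)
    case 0
    then have "r' = 0" using r' by (simp add: dlt_iff_degree)
    then show ?thesis by simp
  next
    case (Suc n1)
    then have Q: "?Q = OP L n1" by simp
    define d where "d = coeff r' n1"
    define r'' where "r'' = r' - smult d (OP L n1)"
    have r'': "dlt r'' n1" unfolding r''_def d_def using dlt_decomp[of r' n1 L] r' Suc by simp
    have rr: "r' = smult d (OP L n1) + r''" by (simp add: r''_def)
    have xr: "dlt (xp * r'') n" using dlt_xp[OF r''] Suc by simp
    have e1: "L (r'' * ?P) = 0" "L ((xp * r'') * ?P) = 0"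
      using IH[of n r''] IH[of n "xp * r''"] r'' xr dlt_mono[of r'' n1 n] Suc by auto
    have e2: "L (r'' * OP L n1) = 0" using IH[of n1 r''] r'' Suc by simp
    have e3: "L ((xp * OP L n1) * ?P) = hh L n"
    proof -
      have "xp * OP L n1 = ?P + (xp * OP L n1 - OP L (Suc n1))" using Suc by simp
      then have "L ((xp * OP L n1) * ?P) = L (?P * ?P) + L ((xp * OP L n1 - OP L (Suc n1)) * ?P)"
        by (metis L_add distrib_right)
      also have "L ((xp * OP L n1 - OP L (Suc n1)) * ?P) = 0"
        using IH[of n "xp * OP L n1 - OP L (Suc n1)"] xOP_decomp[of L n1] Suc by simp
      finally show ?thesis by (simp add: hh_def)
    qed
    have e4: "L (r' * ?P) = 0" using IH[of n r'] r' by simp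
    have hn1: "hh L n1 > 0" by (rule hh_pos)
    have bq: "?b * hh L n1 = hh L n" using Suc hn1 by (simp add: bb_def)
    have "L (r' * OP L (Suc n)) = L ((xp * r') * ?P) - ?a * L (r' * ?P) - ?b * L (r' * ?Q)"
      unfolding PS by (simp add: algebra_simps)
    also have "L ((xp * r') * ?P) = d * hh L n"
      using e1 e3 unfolding rr by (simp add: algebra_simps)
    also have "L (r' * ?Q) = d * hh L n1"
      using e2 unfolding rr Q by (simp add: algebra_simps hh_def)
    finally show ?thesis using e4 bq by simp
  qed
  have "L (r * OP L (Suc n)) = 0" if r: "dlt r (Suc n)" for r
  proof -
    define c where "c = coeff r n"
    have r': "dlt (r - smult c ?P) n" unfolding c_def using dlt_decomp[OF r] .
    have "r = smult c ?P + (r - smult c ?P)" by simp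
    then have "L (r * OP L (Suc n)) = c * L (?P * OP L (Suc n)) + L ((r - smult c ?P) * OP L (Suc n))"
      by (metis L_add L_smult distrib_right mult_smult_left)
    then show ?thesis using A B[OF r'] by simp
  qed
  then show ?case using Suc by (auto simp: le_Suc_eq)
qed

lemma orth: "dlt r n \<Longrightarrow> L (r * OP L n) = 0"
  using orth_all by blast

end


lemma rec_unique:
  assumes "xp * OP L n = OP L (Suc n) + smult a (OP L n) + smult b (OPm L n)"
  shows "a = aa L n" and "n \<noteq> 0 \<Longrightarrow> b = bb L n"
proof -
  have e0: "xp * OP L n = OP L (Suc n) + smult (aa L n) (OP L n) + smult (bb L n) (OPm L n)"
    by (simp add: OP_Suc xp_def algebra_simps)
  have h: "smult a (OP L n) + smult b (OPm L n) = smult (aa L n) (OP L n) + smult (bb L n) (OPm L n)"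
    using assms e0 by (simp add: add.assoc)
  have gl: "x + y = u + v \<Longrightarrow> x - u = v - y" for x y u v :: "real poly"
    by (metis add_diff_cancel_left' add_diff_cancel_right' add_diff_eq diff_add_eq diff_diff_eq2)
  have e: "smult (a - aa L n) (OP L n) = smult (bb L n - b) (OPm L n)"
    using gl[OF h] by (simp add: smult_diff_left)
  have "coeff (OPm L n) n = 0" using OPm_dlt[of L n] by (simp add: dlt_def)
  then have "coeff (smult (a - aa L n) (OP L n)) n = 0" using e by simp
  then show "a = aa L n" using OP_lead[of L n] by simp
  assume "n \<noteq> 0"
  then have "OPm L n \<noteq> 0" using OP_nz OPm_eq by metis
  moreover have "smult (bb L n - b) (OPm L n) = 0" using e \<open>a = aa L n\<close> by simp
  ultimately show "b = bb L n" by simp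
qed

context pdf begin

lemma dlt_sum_monom: "dlt r n \<Longrightarrow> r = (\<Sum>j<n. smult (coeff r j) (monom 1 j))"
  by (auto simp: poly_eq_iff coeff_sum dlt_def smult_monom coeff_monom
      intro!: sym[OF sum.neutral] split: if_splits)

lemma orth_from_monoms:
  assumes "\<forall>j<n. L (monom 1 j * p) = 0" "dlt r n"
  shows "L (r * p) = 0"
proof -
  have "L (r * p) = L (\<Sum>j<n. smult (coeff r j) (monom 1 j * p))"
    by (subst dlt_sum_monom[OF assms(2)]) (simp add: sum_distrib_right)
  also have "\<dots> = 0" using assms(1) by (simp add: L_sum)
  finally show ?thesis .
qed

lemma OP_unique:
  assumes "degree p = n" "lead_coeff p = 1" "\<forall>j<n. L (monom 1 j * p) = 0"
  shows "p = OP L n"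
proof -
  define d where "d = p - OP L n"
  have dd: "dlt d n" unfolding d_def dlt_def
  proof (intro allI impI)
    fix i assume "n \<le> i"
    then show "coeff (p - OP L n) i = 0"
      using assms OP_lead[of L n] OP_dlt[of L n] coeff_eq_0[of p i]
      by (cases "i = n") (auto simp: dlt_def)
  qed
  have "L (d * p) = 0" by (rule orth_from_monoms[OF assms(3) dd])
  moreover have "L (d * OP L n) = 0" by (rule orth[OF dd])
  moreover have "d * d = d * p - d * OP L n" unfolding d_def by (simp add: right_diff_distrib)
  ultimately have "L (d * d) = 0" by simp
  then have "d = 0" using pos by fastforce
  then show ?thesis by (simp add: d_def)
qed

lemma OP_monoms: "\<forall>j<n. L (monom 1 j * OP L n) = 0"
  by (auto intro!: orth simp: dlt_def coeff_monom)

end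

definition Lw :: "(real \<Rightarrow> real) \<Rightarrow> real poly \<Rightarrow> real" where
  "Lw w p = (LINT x:{0<..}|lborel. poly p x * w x)"

lemma is_monic_OP_Lw:
  "is_monic_OP w n p \<longleftrightarrow> degree p = n \<and> lead_coeff p = 1 \<and> (\<forall>j<n. Lw w (monom 1 j * p) = 0)"
  unfolding is_monic_OP_def Lw_def by (simp add: poly_monom)

lemma monicOP_eq: "pdf (Lw w) \<Longrightarrow> monicOP w n = OP (Lw w) n"
  unfolding monicOP_def
proof (rule the_equality)
  assume "pdf (Lw w)"
  then interpret pdf "Lw w" .
  show "is_monic_OP w n (OP (Lw w) n)"
    unfolding is_monic_OP_Lw using OP_degree OP_lead OP_monoms by auto
  show "p = OP (Lw w) n" if "is_monic_OP w n p" for p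
    using that unfolding is_monic_OP_Lw by (intro OP_unique) auto
qed

lemma prevOP_eq: "pdf (Lw w) \<Longrightarrow> prevOP w n = OPm (Lw w) n"
  unfolding prevOP_def by (simp add: monicOP_eq OPm_eq)

lemma rec_alpha_eq: "pdf (Lw w) \<Longrightarrow> rec_alpha w n = aa (Lw w) n"
  unfolding rec_alpha_def monicOP_eq prevOP_eq xp_def[symmetric]
proof (rule the_equality)
  show "\<exists>b. xp * OP (Lw w) n = OP (Lw w) (Suc n) + smult (aa (Lw w) n) (OP (Lw w) n) + smult b (OPm (Lw w) n)"
    by (rule exI[of _ "bb (Lw w) n"]) (simp add: OP_Suc xp_def algebra_simps)
  show "a = aa (Lw w) n" if "\<exists>b. xp * OP (Lw w) n = OP (Lw w) (Suc n) + smult a (OP (Lw w) n) + smult b (OPm (Lw w) n)" for a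
    using that rec_unique by blast
qed

lemma rec_beta_eq: assumes pw: "pdf (Lw w)" shows "rec_beta w n = bb (Lw w) n"
proof (cases "n = 0")
  case False
  have "(THE b. \<exists>a. xp * OP (Lw w) n = OP (Lw w) (Suc n) + smult a (OP (Lw w) n) + smult b (OPm (Lw w) n)) = bb (Lw w) n"
  proof (rule the_equality)
    show "\<exists>a. xp * OP (Lw w) n = OP (Lw w) (Suc n) + smult a (OP (Lw w) n) + smult (bb (Lw w) n) (OPm (Lw w) n)"
      by (rule exI[of _ "aa (Lw w) n"]) (simp add: OP_Suc xp_def algebra_simps)
    show "b = bb (Lw w) n" if "\<exists>a. xp * OP (Lw w) n = OP (Lw w) (Suc n) + smult a (OP (Lw w) n) + smult b (OPm (Lw w) n)" for b
      using that rec_unique False by blast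
  qed
  then show ?thesis using False unfolding rec_beta_def monicOP_eq[OF pw] prevOP_eq[OF pw] xp_def[symmetric] by simp
qed (simp add: bb_def rec_beta_def)


definition pdv :: "(real \<Rightarrow> real poly) \<Rightarrow> real poly \<Rightarrow> real \<Rightarrow> bool" where
  "pdv P Q s0 \<longleftrightarrow> (\<exists>N. \<forall>s. dlt (P s) N) \<and>
     (\<forall>i. ((\<lambda>s. coeff (P s) i) has_real_derivative coeff Q i) (at s0))"

lemma DM: "(f has_real_derivative a) (at x) \<Longrightarrow> (g has_real_derivative b) (at x) \<Longrightarrow>
  ((\<lambda>s. f s * g s) has_real_derivative (a * g x + f x * b)) (at x)"
  by (drule (1) DERIV_mult) (simp add: mult.commute)

lemma dlt_mult: "dlt p N \<Longrightarrow> dlt q M \<Longrightarrow> dlt (p * q) (N + M)"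
  unfolding dlt_iff_degree
  by (metis add_less_mono degree_mult_le le_less_trans mult_eq_0_iff add_diff_cancel_left'
      degree_mult_eq)

lemma pdv_const: "pdv (\<lambda>s. p) 0 s0"
  unfolding pdv_def by (auto intro!: exI[of _ "Suc (degree p)"] simp: dlt_iff_degree)

lemma pdv_add: assumes "pdv P Q s0" "pdv R S s0" shows "pdv (\<lambda>s. P s + R s) (Q + S) s0"
proof -
  obtain N M where N: "\<And>s. dlt (P s) N" and M: "\<And>s. dlt (R s) M"
    using assms unfolding pdv_def by blast
  have "dlt (P s + R s) (max N M)" for s
    using N[of s] M[of s] by (intro dlt_add) (auto intro: dlt_mono)
  moreover have "((\<lambda>s. coeff (P s + R s) i) has_real_derivative coeff (Q + S) i) (at s0)" for i
    using assms unfolding pdv_def by (simp add: DERIV_add)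
  ultimately show ?thesis unfolding pdv_def by blast
qed

lemma pdv_diff: assumes "pdv P Q s0" "pdv R S s0" shows "pdv (\<lambda>s. P s - R s) (Q - S) s0"
proof -
  obtain N M where N: "\<And>s. dlt (P s) N" and M: "\<And>s. dlt (R s) M"
    using assms unfolding pdv_def by blast
  have "dlt (P s - R s) (max N M)" for s
    using N[of s] M[of s] by (intro dlt_diff) (auto intro: dlt_mono)
  moreover have "((\<lambda>s. coeff (P s - R s) i) has_real_derivative coeff (Q - S) i) (at s0)" for i
    using assms unfolding pdv_def by (simp add: DERIV_diff)
  ultimately show ?thesis unfolding pdv_def by blast
qed

lemma pdv_smult:
  assumes "(f has_real_derivative f') (at s0)" "pdv P Q s0"
  shows "pdv (\<lambda>s. smult (f s) (P s)) (smult f' (P s0) + smult (f s0) Q) s0"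
  using assms unfolding pdv_def
  by (auto intro!: dlt_smult DM)

lemma pdv_mult:
  assumes "pdv P Q s0" "pdv R S s0"
  shows "pdv (\<lambda>s. P s * R s) (Q * R s0 + P s0 * S) s0"
proof -
  obtain N M where N: "\<And>s. dlt (P s) N" and M: "\<And>s. dlt (R s) M"
    using assms unfolding pdv_def by blast
  have "((\<lambda>s. coeff (P s * R s) i) has_real_derivative coeff (Q * R s0 + P s0 * S) i) (at s0)" for i
  proof -
    have "((\<lambda>s. \<Sum>j\<le>i. coeff (P s) j * coeff (R s) (i - j)) has_real_derivative
        (\<Sum>j\<le>i. coeff Q j * coeff (R s0) (i - j) + coeff (P s0) j * coeff S (i - j))) (at s0)"
      using assms unfolding pdv_def
      by (intro DERIV_sum DM) auto
    then show ?thesis by (simp add: coeff_mult sum.distrib)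
  qed
  then show ?thesis unfolding pdv_def using N M dlt_mult by blast
qed

lemma pdv_dlt:
  assumes "pdv P Q s0" "\<And>s. dlt (P s) N"
  shows "dlt Q N"
  unfolding dlt_def
proof (intro allI impI)
  fix i assume "N \<le> i"
  then have "(\<lambda>s. coeff (P s) i) = (\<lambda>s. 0)" using assms(2) by (auto simp: dlt_def)
  then have "((\<lambda>s. 0) has_real_derivative coeff Q i) (at s0)" using assms(1) unfolding pdv_def by metis
  then show "coeff Q i = 0" using DERIV_const DERIV_unique by blast
qed

lemma pdv_const_coeff:
  assumes "pdv P Q s0" "\<And>s. coeff (P s) i = c"
  shows "coeff Q i = 0"
proof -
  have "(\<lambda>s. coeff (P s) i) = (\<lambda>s. c)" using assms(2) by auto
  then have "((\<lambda>s. c) has_real_derivative coeff Q i) (at s0)" using assms(1) unfolding pdv_def by metis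
  then show "coeff Q i = 0" using DERIV_const DERIV_unique by blast
qed

lemma dlt_sum_monom': "dlt r n \<Longrightarrow> r = (\<Sum>j<n. smult (coeff r j) (monom 1 j))"
  by (auto simp: poly_eq_iff coeff_sum dlt_def smult_monom coeff_monom
      intro!: sym[OF sum.neutral] split: if_splits)

lemma linf_sum_monom: "linf L \<Longrightarrow> dlt r n \<Longrightarrow> L r = (\<Sum>j<n. coeff r j * L (monom 1 j))"
  apply (subst dlt_sum_monom', assumption)
  by (simp add: linf.L_sum linf.L_smult)

lemma L_deriv:
  assumes lin: "\<And>s. linf (L s)" and lin': "linf L'"
    and der: "\<And>p. ((\<lambda>s. L s p) has_real_derivative L' p) (at s0)"
    and P: "pdv P Q s0"
  shows "((\<lambda>s. L s (P s)) has_real_derivative (L' (P s0) + L s0 Q)) (at s0)"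
proof -
  obtain N where N: "\<And>s. dlt (P s) N" using P unfolding pdv_def by blast
  have QN: "dlt Q N" using pdv_dlt[OF P N] .
  have e: "L s (P s) = (\<Sum>j<N. coeff (P s) j * L s (monom 1 j))" for s
    using linf_sum_monom[OF lin N] .
  have D: "((\<lambda>s. \<Sum>j<N. coeff (P s) j * L s (monom 1 j)) has_real_derivative
     (\<Sum>j<N. coeff Q j * L s0 (monom 1 j) + coeff (P s0) j * L' (monom 1 j))) (at s0)"
    using P der unfolding pdv_def by (intro DERIV_sum DM) auto
  have E: "(\<Sum>j<N. coeff Q j * L s0 (monom 1 j) + coeff (P s0) j * L' (monom 1 j)) = L' (P s0) + L s0 Q"
  proof -
    have E1: "L s0 Q = (\<Sum>j<N. coeff Q j * L s0 (monom 1 j))" by (rule linf_sum_monom[OF lin QN])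
    have E2: "L' (P s0) = (\<Sum>j<N. coeff (P s0) j * L' (monom 1 j))" by (rule linf_sum_monom[OF lin' N])
    show ?thesis unfolding E1 E2 sum.distrib by (rule add.commute)
  qed
  show ?thesis using D unfolding E e[symmetric] .
qed


definition pc where "pc L n = (if n = 0 then 0 else coeff (OP L n) (n - 1))"

lemma aa_pc: "aa L n = pc L n - coeff (OP L (Suc n)) n"
proof -
  have e: "[:- aa L n, 1:] * OP L n = smult (- aa L n) (OP L n) + pCons 0 (OP L n)"
    by (simp add: algebra_simps)
  have "coeff (OPm L n) n = 0" using OPm_dlt[of L n] by (simp add: dlt_def)
  then have "coeff (OP L (Suc n)) n = pc L n - aa L n"
    unfolding OP_Suc e using OP_lead[of L n] by (simp add: pc_def coeff_pCons split: nat.splits)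
  then show ?thesis by simp
qed

locale fam =
  fixes L :: "real \<Rightarrow> real poly \<Rightarrow> real" and L' :: "real poly \<Rightarrow> real" and s0 :: real
  assumes lin: "\<And>s. linf (L s)" and lin': "linf L'"
    and der: "\<And>p. ((\<lambda>s. L s p) has_real_derivative L' p) (at s0)"
    and ev: "eventually (\<lambda>s. pdf (L s)) (nhds s0)"
begin

lemma pdf0: "pdf (L s0)" using ev eventually_nhds_x_imp_x by blast

lemma Lder: "pdv P Q s0 \<Longrightarrow> ((\<lambda>s. L s (P s)) has_real_derivative (L' (P s0) + L s0 Q)) (at s0)"
  by (rule L_deriv[OF lin lin' der])

lemma OP_pdv: "\<exists>Q R. pdv (\<lambda>s. OP (L s) n) Q s0 \<and> pdv (\<lambda>s. OPm (L s) n) R s0"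
proof (induction n)
  case 0
  then show ?case using pdv_const[of 1 s0] pdv_const[of 0 s0] by auto
next
  case (Suc n)
  then obtain Q R where Q: "pdv (\<lambda>s. OP (L s) n) Q s0" and R: "pdv (\<lambda>s. OPm (L s) n) R s0" by blast
  have hpos: "hh (L s0) n > 0" using pdf.hh_pos[OF pdf0] .
  have da: "\<exists>d. ((\<lambda>s. aa (L s) n) has_real_derivative d) (at s0)"
  proof -
    have "\<exists>d. ((\<lambda>s. L s (xp * OP (L s) n * OP (L s) n)) has_real_derivative d) (at s0)"
      using Lder[OF pdv_mult[OF pdv_mult[OF pdv_const Q] Q]] by blast
    moreover have "\<exists>d. ((\<lambda>s. L s (OP (L s) n * OP (L s) n)) has_real_derivative d) (at s0)"
      using Lder[OF pdv_mult[OF Q Q]] by blast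
    ultimately obtain d1 d2 where "((\<lambda>s. L s (xp * OP (L s) n * OP (L s) n)) has_real_derivative d1) (at s0)"
      "((\<lambda>s. L s (OP (L s) n * OP (L s) n)) has_real_derivative d2) (at s0)" by blast
    from DERIV_divide[OF this] hpos show ?thesis unfolding aa_def hh_def by auto
  qed
  have db: "\<exists>d. ((\<lambda>s. bb (L s) n) has_real_derivative d) (at s0)"
  proof (cases n)
    case 0 then show ?thesis by (auto simp: bb_def intro: DERIV_const)
  next
    case (Suc m)
    have hm: "hh (L s0) m > 0" using pdf.hh_pos[OF pdf0] .
    have R': "pdv (\<lambda>s. OP (L s) m) R s0" using R Suc by simp
    have "\<exists>d. ((\<lambda>s. L s (OP (L s) n * OP (L s) n)) has_real_derivative d) (at s0)"
      using Lder[OF pdv_mult[OF Q Q]] by blast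
    moreover have "\<exists>d. ((\<lambda>s. L s (OP (L s) m * OP (L s) m)) has_real_derivative d) (at s0)"
      using Lder[OF pdv_mult[OF R' R']] by blast
    ultimately obtain d1 d2 where "((\<lambda>s. L s (OP (L s) n * OP (L s) n)) has_real_derivative d1) (at s0)"
      "((\<lambda>s. L s (OP (L s) m * OP (L s) m)) has_real_derivative d2) (at s0)" by blast
    from DERIV_divide[OF this] hm Suc show ?thesis unfolding bb_def hh_def by auto
  qed
  obtain a' b' where a': "((\<lambda>s. aa (L s) n) has_real_derivative a') (at s0)"
    and b': "((\<lambda>s. bb (L s) n) has_real_derivative b') (at s0)" using da db by blast
  have e: "OP (L s) (Suc n) = xp * OP (L s) n - smult (aa (L s) n) (OP (L s) n) - smult (bb (L s) n) (OPm (L s) n)" for s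
    by (simp add: OP_Suc xp_def algebra_simps)
  obtain Q' where "pdv (\<lambda>s. xp * OP (L s) n - smult (aa (L s) n) (OP (L s) n) - smult (bb (L s) n) (OPm (L s) n)) Q' s0"
    using pdv_diff[OF pdv_diff[OF pdv_mult[OF pdv_const Q] pdv_smult[OF a' Q]] pdv_smult[OF b' R]] by blast
  then show ?case unfolding e using Q by auto
qed

lemma OP_dltQ:
  assumes Q: "pdv (\<lambda>s. OP (L s) n) Q s0"
  shows "dlt Q n"
proof -
  have "dlt Q (Suc n)" using pdv_dlt[OF Q OP_dlt] .
  moreover have "coeff Q n = 0" using pdv_const_coeff[OF Q OP_lead] .
  ultimately show ?thesis unfolding dlt_def by (metis le_eq_less_or_eq Suc_le_eq)
qed

lemma hh_deriv:
  "((\<lambda>s. hh (L s) n) has_real_derivative L' (OP (L s0) n * OP (L s0) n)) (at s0)"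
proof -
  obtain Q where Q: "pdv (\<lambda>s. OP (L s) n) Q s0" using OP_pdv by blast
  have D: "((\<lambda>s. hh (L s) n) has_real_derivative
      L' (OP (L s0) n * OP (L s0) n) + L s0 (Q * OP (L s0) n + OP (L s0) n * Q)) (at s0)"
    unfolding hh_def by (rule Lder[OF pdv_mult[OF Q Q]])
  interpret p0: pdf "L s0" by (rule pdf0)
  have "L s0 (Q * OP (L s0) n) = 0" using p0.orth[OF OP_dltQ[OF Q]] .
  then have "L s0 (Q * OP (L s0) n + OP (L s0) n * Q) = 0"
    using linf.L_add[OF lin, of s0 "Q * OP (L s0) n" "OP (L s0) n * Q"] by (simp add: mult.commute)
  then show ?thesis using D by simp
qed

lemma pc_key:
  assumes Q: "pdv (\<lambda>s. OP (L s) (Suc m)) Q s0"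
  shows "coeff Q m = - L' (OP (L s0) m * OP (L s0) (Suc m)) / hh (L s0) m"
proof -
  interpret p0: pdf "L s0" by (rule pdf0)
  define C where "C = OP (L s0) m"
  have D: "((\<lambda>s. L s (C * OP (L s) (Suc m))) has_real_derivative
      L' (C * OP (L s0) (Suc m)) + L s0 (0 * OP (L s0) (Suc m) + C * Q)) (at s0)"
    by (rule Lder[OF pdv_mult[OF pdv_const Q]])
  have "eventually (\<lambda>s. L s (C * OP (L s) (Suc m)) = 0) (nhds s0)"
    using ev by eventually_elim (use pdf.orth OP_dlt in \<open>auto simp: C_def\<close>)
  then have D0: "((\<lambda>s. L s (C * OP (L s) (Suc m))) has_real_derivative 0) (at s0)"
    by (subst DERIV_cong_ev[OF refl _ refl, of _ "\<lambda>_. 0"]) (auto intro: DERIV_const)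
  have z: "L' (C * OP (L s0) (Suc m)) + L s0 (C * Q) = 0" using DERIV_unique[OF D D0] by simp
  have dQ: "dlt Q (Suc m)" by (rule OP_dltQ[OF Q])
  define r where "r = Q - smult (coeff Q m) C"
  have r: "dlt r m" unfolding r_def C_def by (rule dlt_decomp[OF dQ])
  have "L s0 (C * Q) = coeff Q m * hh (L s0) m + L s0 (r * C)"
  proof -
    have "C * Q = smult (coeff Q m) (C * C) + r * C" by (simp add: r_def algebra_simps)
    then show ?thesis by (simp add: hh_def C_def)
  qed
  also have "L s0 (r * C) = 0" unfolding C_def by (rule p0.orth[OF r])
  finally have "L' (C * OP (L s0) (Suc m)) + coeff Q m * hh (L s0) m = 0" using z by simp
  moreover have "hh (L s0) m > 0" by (rule p0.hh_pos)
  ultimately show ?thesis unfolding C_def by (simp add: field_simps)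
qed

lemma aa_deriv:
  "((\<lambda>s. aa (L s) n) has_real_derivative
     (L' (OP (L s0) n * OP (L s0) (Suc n)) / hh (L s0) n
      - L' (OPm (L s0) n * OP (L s0) n) / hh (L s0) (n - 1))) (at s0)"
proof -
  obtain Q1 where Q1: "pdv (\<lambda>s. OP (L s) (Suc n)) Q1 s0" using OP_pdv by blast
  have d1: "((\<lambda>s. coeff (OP (L s) (Suc n)) n) has_real_derivative
      - L' (OP (L s0) n * OP (L s0) (Suc n)) / hh (L s0) n) (at s0)"
    using Q1 pc_key[OF Q1] unfolding pdv_def by metis
  have d2: "((\<lambda>s. pc (L s) n) has_real_derivative
      - L' (OPm (L s0) n * OP (L s0) n) / hh (L s0) (n - 1)) (at s0)"
  proof (cases n)
    case 0 then show ?thesis using linf.L_zero[OF lin'] by (simp add: pc_def)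
  next
    case (Suc m)
    obtain Q where Q: "pdv (\<lambda>s. OP (L s) (Suc m)) Q s0" using OP_pdv by blast
    then show ?thesis using pc_key[OF Q] Suc unfolding pdv_def pc_def by (simp del: OP_Suc) metis
  qed
  show ?thesis unfolding aa_pc using DERIV_diff[OF d2 d1] by simp
qed

end


definition Dop :: "real \<Rightarrow> real poly \<Rightarrow> real poly" where
  "Dop a p = smult (a + 1) p + xp * pderiv p - xp * p"

lemma coeff_xp_pderiv: "coeff (xp * pderiv p) i = of_nat i * coeff p i"
  by (cases i) (simp_all add: xp_def coeff_pderiv)

lemma xpd_decomp: "dlt (xp * pderiv (OP L n) - smult (of_nat n) (OP L n)) n"
  unfolding dlt_def
proof (intro allI impI)
  fix i assume "n \<le> i"
  then show "coeff (xp * pderiv (OP L n) - smult (of_nat n) (OP L n)) i = 0"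
    using OP_dlt[of L n] by (cases "i = n") (auto simp: coeff_xp_pderiv dlt_def)
qed

lemma xpd_dlt: "dlt (xp * pderiv (OP L n)) (Suc n)"
  unfolding dlt_def using OP_dlt[of L n] by (auto simp: coeff_xp_pderiv dlt_def)

context pdf begin

lemma T1: "L (Dop a (OP L n * OP L n)) = (a + 1 + 2 * of_nat n - aa L n) * hh L n"
proof -
  let ?P = "OP L n"
  define r where "r = xp * pderiv ?P - smult (of_nat n) ?P"
  have r: "dlt r n" unfolding r_def by (rule xpd_decomp)
  have e1: "L (xp * ?P * ?P) = aa L n * hh L n" using hh_pos[of n] by (simp add: aa_def)
  have "L ((xp * pderiv ?P) * ?P) = of_nat n * hh L n + L (r * ?P)"
  proof -
    have "(xp * pderiv ?P) * ?P = smult (of_nat n) (?P * ?P) + r * ?P" by (simp add: r_def algebra_simps)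
    then show ?thesis by (simp add: hh_def)
  qed
  also have "L (r * ?P) = 0" by (rule orth[OF r])
  finally have e2: "L ((xp * pderiv ?P) * ?P) = of_nat n * hh L n" by simp
  have "Dop a (?P * ?P) = smult (a + 1) (?P * ?P) + ((xp * pderiv ?P) * ?P + (xp * pderiv ?P) * ?P) - xp * ?P * ?P"
    by (simp add: Dop_def pderiv_mult algebra_simps)
  then have "L (Dop a (?P * ?P)) = (a + 1) * hh L n + (L ((xp * pderiv ?P) * ?P) + L ((xp * pderiv ?P) * ?P)) - L (xp * ?P * ?P)"
    by (simp only: L_diff L_add L_smult hh_def)
  then show ?thesis using e1 e2 by (simp add: algebra_simps)
qed

lemma T2: "L (Dop a (OP L n * OP L (Suc n))) = - coeff (OP L (Suc n)) n * hh L n - hh L (Suc n)"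
proof -
  let ?P = "OP L n" and ?R = "OP L (Suc n)"
  have o1: "L (?P * ?R) = 0" using orth[of ?P "Suc n"] OP_dlt[of L n] by simp
  have o2: "L ((xp * pderiv ?P) * ?R) = 0" using orth[OF xpd_dlt] .
  define r' where "r' = xp * pderiv ?R - smult (of_nat (Suc n)) ?R"
  have r': "dlt r' (Suc n)" unfolding r'_def by (rule xpd_decomp)
  have cr: "coeff r' n = - coeff ?R n" unfolding r'_def by (simp add: coeff_xp_pderiv algebra_simps)
  define r'' where "r'' = r' - smult (coeff r' n) ?P"
  have r'': "dlt r'' n" unfolding r''_def by (rule dlt_decomp[OF r'])
  have e3: "L ((xp * pderiv ?R) * ?P) = - coeff ?R n * hh L n"
  proof -
    have "(xp * pderiv ?R) * ?P = smult (of_nat (Suc n)) (?P * ?R) + smult (coeff r' n) (?P * ?P) + r'' * ?P"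
      by (simp add: r''_def r'_def algebra_simps)
    then have "L ((xp * pderiv ?R) * ?P) = of_nat (Suc n) * L (?P * ?R) + coeff r' n * hh L n + L (r'' * ?P)"
      by (simp add: hh_def)
    then show ?thesis using o1 orth[OF r''] cr by simp
  qed
  define s where "s = xp * ?P - ?R"
  have s: "dlt s (Suc n)" unfolding s_def by (rule xOP_decomp)
  have e4: "L (xp * ?P * ?R) = hh L (Suc n)"
  proof -
    have "xp * ?P * ?R = ?R * ?R + s * ?R" by (simp add: s_def algebra_simps)
    then show ?thesis using orth[OF s] by (simp add: hh_def)
  qed
  have "Dop a (?P * ?R) = smult (a + 1) (?P * ?R) + (xp * pderiv ?P) * ?R + (xp * pderiv ?R) * ?P - xp * ?P * ?R"
    by (simp add: Dop_def pderiv_mult algebra_simps)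
  then have "L (Dop a (?P * ?R)) = (a + 1) * L (?P * ?R) + L ((xp * pderiv ?P) * ?R) + L ((xp * pderiv ?R) * ?P) - L (xp * ?P * ?R)"
    by simp
  then show ?thesis using o1 o2 e3 e4 by simp
qed

end


definition gw :: "real \<Rightarrow> real \<Rightarrow> real" where "gw a x = x powr a * exp (- x)"

lemma int_mono:
  assumes a: "a > -1"
  shows "set_integrable lborel {0<..} (\<lambda>x. x ^ j * gw a x)"
proof -
  have s: "real j + a + 1 > 0" using a by simp
  have nn: "nn_integral lborel (\<lambda>t. ennreal (indicator {0..} t * t powr (real j + a + 1 - 1) / exp t)) = ennreal (Gamma (real j + a + 1))"
    using Gamma_conv_nn_integral_real[OF s] by simp
  have i: "integrable lborel (\<lambda>t. indicator {0..} t * t powr (real j + a + 1 - 1) / exp t)"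
    by (rule integrableI_nn_integral_finite[OF _ _ nn]) auto
  have "(\<lambda>t. indicator {0..} t * t powr (real j + a + 1 - 1) / exp t) = (\<lambda>x. indicator {0<..} x *\<^sub>R (x ^ j * gw a x))"
  proof
    fix x :: real
    show "indicator {0..} x * x powr (real j + a + 1 - 1) / exp x = indicator {0<..} x *\<^sub>R (x ^ j * gw a x)"
    proof (cases "x > 0")
      case True
      then have "x powr (real j + a) = x ^ j * x powr a" by (simp add: powr_add powr_realpow)
      then show ?thesis using True by (simp add: gw_def exp_minus field_simps)
    next
      case False
      then show ?thesis by (cases "x = 0") (auto simp: indicator_def)
    qed
  qed
  then show ?thesis using i unfolding set_integrable_def by simp
qed

lemma int_poly:
  assumes a: "a > -1" and c: "c \<ge> 0"
  shows "set_integrable lborel {c<..} (\<lambda>x. poly p x * gw a x)"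
proof -
  have "set_integrable lborel {0<..} (\<lambda>x. \<Sum>i\<le>degree p. coeff p i * (x ^ i * gw a x))"
    unfolding set_integrable_def scaleR_sum_right
  proof (intro Bochner_Integration.integrable_sum)
    fix i
    have "integrable lborel (\<lambda>x. coeff p i * (indicator {0<..} x *\<^sub>R (x ^ i * gw a x)))"
      using int_mono[OF a, of i] unfolding set_integrable_def by (rule integrable_mult_right)
    then show "integrable lborel (\<lambda>x. indicator {0<..} x *\<^sub>R (coeff p i * (x ^ i * gw a x)))"
      by (simp add: algebra_simps)
  qed
  then have "set_integrable lborel {0<..} (\<lambda>x. poly p x * gw a x)"
    by (simp add: poly_altdef sum_distrib_right mult.assoc)
  then show ?thesis
    by (rule set_integrable_subset) (use c in auto)
qed

definition Ic :: "real \<Rightarrow> real \<Rightarrow> real poly \<Rightarrow> real" where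
  "Ic a c p = (LINT x:{c<..}|lborel. poly p x * gw a x)"

lemma Ic_linf: "a > -1 \<Longrightarrow> c \<ge> 0 \<Longrightarrow> linf (Ic a c)"
  unfolding linf_def Ic_def
  by (auto simp: distrib_right mult.assoc intro!: set_integral_add int_poly)


lemma F_lim_top: "((\<lambda>x::real. x powr b * exp (- x) * poly p x) \<longlongrightarrow> 0) at_top"
proof -
  have "((\<lambda>x::real. \<Sum>i\<le>degree p. coeff p i * (x ^ i * x powr b * exp (- x))) \<longlongrightarrow> (\<Sum>i\<le>degree p. coeff p i * 0)) at_top"
    by (intro tendsto_sum tendsto_mult tendsto_const) real_asymp
  then show ?thesis
    by (simp add: poly_altdef sum_distrib_left sum_distrib_right mult_ac)
qed

lemma Ic_Dop:
  assumes a: "a > -1" and c: "c \<ge> 0"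
  shows "Ic a c (Dop a p) = - (c powr (a + 1) * exp (- c) * poly p c)"
proof -
  define F where "F x = x powr (a + 1) * exp (- x) * poly p x" for x
  define f where "f x = poly (Dop a p) x * gw a x" for x
  have deriv: "(F has_real_derivative f x) (at x)" if x: "x > 0" for x
  proof -
    have "(F has_real_derivative
        ((a + 1) * x powr (a + 1 - 1) * exp (- x) * poly p x + x powr (a + 1) * (- exp (- x)) * poly p x
         + x powr (a + 1) * exp (- x) * poly (pderiv p) x)) (at x)"
      unfolding F_def
      by (intro DERIV_mult[THEN DERIV_cong] has_real_derivative_powr x poly_DERIV
          DERIV_exp[THEN DERIV_chain2[of exp]] derivative_eq_intros, auto simp: algebra_simps)
    moreover have "x powr (a + 1) = x * x powr a" using x by (simp add: powr_add)
    ultimately show ?thesis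
      by (simp add: f_def gw_def Dop_def xp_def algebra_simps)
  qed
  have "(LBINT x=ereal c..\<infinity>. f x) = 0 - F c"
  proof (rule interval_integral_FTC_integrable)
    show "ereal c < \<infinity>" by simp
    show "(F has_vector_derivative f x) (at x)" if "ereal c < ereal x" "ereal x < \<infinity>" for x
      using deriv[of x] that c by (simp add: has_real_derivative_iff_has_vector_derivative)
    show "isCont f x" if "ereal c < ereal x" "ereal x < \<infinity>" for x
      using that c unfolding f_def gw_def by (auto intro!: continuous_intros)
    show "set_integrable lborel (einterval (ereal c) \<infinity>) f"
      unfolding f_def using int_poly[OF a c] by simp
    have P: "((\<lambda>x. x powr (a + 1)) \<longlongrightarrow> c powr (a + 1)) (at_right c)"
    proof (cases "c = 0")
      case True
      then show ?thesis using a
        by (auto intro!: tendsto_zero_powrI tendsto_ident_at eventually_at_rightI[of 0 1])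
    next
      case False
      then show ?thesis using c by (auto intro!: tendsto_intros)
    qed
    have "(F \<longlongrightarrow> F c) (at_right c)"
      unfolding F_def by (intro tendsto_mult P) (auto intro!: tendsto_intros)
    then show "((F \<circ> real_of_ereal) \<longlongrightarrow> F c) (at_right (ereal c))"
      by (simp add: ereal_tendsto_simps)
    show "((F \<circ> real_of_ereal) \<longlongrightarrow> 0) (at_left \<infinity>)"
      unfolding ereal_tendsto_simps F_def by (rule F_lim_top)
  qed
  then show ?thesis
    by (simp add: Ic_def f_def interval_lebesgue_integral_def F_def)
qed


lemma Ic_interval: "Ic a s p = (LBINT x=ereal s..\<infinity>. poly p x * gw a x)"
  by (simp add: Ic_def interval_lebesgue_integral_def)

lemma Ic_deriv:
  assumes a: "a > -1" and c: "c > 0"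
  shows "((\<lambda>s. Ic a s p) has_real_derivative - (poly p c * gw a c)) (at c)"
proof -
  define f where "f x = poly p x * gw a x" for x
  have cont: "continuous_on {c/2..2*c} f"
    unfolding f_def gw_def using c by (auto intro!: continuous_intros)
  have "((\<lambda>u. LBINT y=ereal (c/2)..ereal u. f y) has_vector_derivative f c) (at c within {c/2..2*c})"
    by (rule interval_integral_FTC2) (use c cont in auto)
  then have G: "((\<lambda>u. LBINT y=ereal (c/2)..ereal u. f y) has_real_derivative f c) (at c)"
    using c by (subst (asm) at_within_interior) (auto simp: has_real_derivative_iff_has_vector_derivative)
  have ev: "eventually (\<lambda>s. Ic a s p = Ic a (c/2) p - (LBINT y=ereal (c/2)..ereal s. f y)) (nhds c)"
  proof -
    have "eventually (\<lambda>s. s \<in> {0<..}) (nhds c)" using c by (intro eventually_nhds_in_open) auto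
    then show ?thesis
    proof eventually_elim
      case (elim s)
      have "interval_lebesgue_integrable lborel (min (ereal (c/2)) (min (ereal s) \<infinity>)) (max (ereal (c/2)) (max (ereal s) \<infinity>)) f"
        unfolding interval_lebesgue_integrable_def f_def using elim c by (cases "s \<le> c/2") (auto intro!: int_poly[OF a] simp: min_def)
      from interval_integral_sum[OF this] show ?case
        unfolding Ic_interval f_def by simp
    qed
  qed
  have D: "((\<lambda>s. Ic a (c/2) p - (LBINT y=ereal (c/2)..ereal s. f y)) has_real_derivative - f c) (at c)"
    using DERIV_diff[OF DERIV_const[of "Ic a (c/2) p" "at c"] G] by simp
  have fc: "f c = poly p c * gw a c" by (simp add: f_def)
  show ?thesis unfolding fc[symmetric]
    by (subst DERIV_cong_ev[OF refl ev refl]) (rule D)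
qed


lemma lweight_pw:
  assumes t: "\<forall>k\<in>{1..m}. t k \<ge> 0"
  shows "indicator {0<..} x *\<^sub>R (poly p x * lweight a \<omega> m t x) =
      \<omega> 0 * (indicator {0<..} x *\<^sub>R (poly p x * gw a x)) + (\<Sum>k=1..m. \<omega> k * (indicator {t k<..} x *\<^sub>R (poly p x * gw a x)))"
proof -
  define fp where "fp x = poly p x * gw a x" for x
  have "indicator {0<..} x * heaviside (x - t k) = (indicator {t k<..} x :: real)" if "k \<in> {1..m}" for k
    using t that by (auto simp: indicator_def heaviside_def) (metis atLeastAtMost_iff le_less_trans)
  then have "(\<Sum>k=1..m. \<omega> k * (indicator {t k<..} x *\<^sub>R fp x)) =
      (\<Sum>k=1..m. indicator {0<..} x * (\<omega> k * heaviside (x - t k)) * fp x)"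
    by (intro sum.cong) (auto simp: algebra_simps)
  then show ?thesis
    by (simp add: lweight_def fp_def gw_def sum_distrib_left sum_distrib_right algebra_simps)
qed

lemma Lw_integrable:
  assumes a: "a > -1" and t: "\<forall>k\<in>{1..m}. t k \<ge> 0"
  shows "integrable lborel (\<lambda>x. indicator {0<..} x *\<^sub>R (poly p x * lweight a \<omega> m t x))"
proof -
  have i: "integrable lborel (\<lambda>x. indicator {c<..} x *\<^sub>R (poly p x * gw a x))" if "c \<ge> 0" for c
    using int_poly[OF a that, of p] unfolding set_integrable_def .
  show ?thesis unfolding lweight_pw[OF t]
    using i t by (auto intro!: Bochner_Integration.integrable_sum)
qed

lemma Lw_split:
  assumes a: "a > -1" and t: "\<forall>k\<in>{1..m}. t k \<ge> 0"
  shows "Lw (lweight a \<omega> m t) p = \<omega> 0 * Ic a 0 p + (\<Sum>k=1..m. \<omega> k * Ic a (t k) p)"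
proof -
  define fp where "fp x = poly p x * gw a x" for x
  have pw: "indicator {0<..} x *\<^sub>R (poly p x * lweight a \<omega> m t x) =
      \<omega> 0 * (indicator {0<..} x *\<^sub>R fp x) + (\<Sum>k=1..m. \<omega> k * (indicator {t k<..} x *\<^sub>R fp x))" for x
  proof -
    have "indicator {0<..} x * heaviside (x - t k) = (indicator {t k<..} x :: real)" if "k \<in> {1..m}" for k
      using t that by (auto simp: indicator_def heaviside_def) (metis atLeastAtMost_iff le_less_trans)
    then have "(\<Sum>k=1..m. \<omega> k * (indicator {t k<..} x *\<^sub>R fp x)) =
        (\<Sum>k=1..m. indicator {0<..} x * (\<omega> k * heaviside (x - t k)) * fp x)"
      by (intro sum.cong) (auto simp: algebra_simps)
    then show ?thesis
      by (simp add: lweight_def fp_def gw_def sum_distrib_left sum_distrib_right algebra_simps)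
  qed
  have i: "integrable lborel (\<lambda>x. indicator {c<..} x *\<^sub>R fp x)" if "c \<ge> 0" for c
    using int_poly[OF a that, of p] unfolding set_integrable_def fp_def .
  have "Lw (lweight a \<omega> m t) p = (LINT x|lborel. \<omega> 0 * (indicator {0<..} x *\<^sub>R fp x) + (\<Sum>k=1..m. \<omega> k * (indicator {t k<..} x *\<^sub>R fp x)))"
    unfolding Lw_def set_lebesgue_integral_def pw ..
  also have "\<dots> = \<omega> 0 * (LINT x|lborel. indicator {0<..} x *\<^sub>R fp x) + (\<Sum>k=1..m. \<omega> k * (LINT x|lborel. indicator {t k<..} x *\<^sub>R fp x))"
    using i t by (subst Bochner_Integration.integral_add) (auto intro!: Bochner_Integration.integrable_sum simp: Bochner_Integration.integral_sum)
  finally show ?thesis unfolding Ic_def set_lebesgue_integral_def fp_def .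
qed


definition tgood :: "nat \<Rightarrow> (nat \<Rightarrow> real) \<Rightarrow> bool" where
  "tgood m t \<longleftrightarrow> 0 < t 1 \<and> (\<forall>k\<in>{1..<m}. t k < t (Suc k))"

definition wgood :: "nat \<Rightarrow> (nat \<Rightarrow> real) \<Rightarrow> bool" where
  "wgood m \<omega> \<longleftrightarrow> (\<forall>l\<le>m. (\<Sum>k=0..l. \<omega> k) \<ge> 0) \<and> (\<exists>l\<le>m. (\<Sum>k=0..l. \<omega> k) > 0)"

lemma t_mono: "tgood m t \<Longrightarrow> 1 \<le> i \<Longrightarrow> i < j \<Longrightarrow> j \<le> m \<Longrightarrow> t i < t j"
proof (induction j)
  case 0 then show ?case by simp
next
  case (Suc j)
  have step: "t j < t (Suc j)" using Suc.prems unfolding tgood_def by auto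
  show ?case
  proof (cases "i = j")
    case True then show ?thesis using step by simp
  next
    case False
    then have "t i < t j" using Suc by auto
    then show ?thesis using step by simp
  qed
qed

lemma t_le: "tgood m t \<Longrightarrow> 1 \<le> i \<Longrightarrow> i \<le> j \<Longrightarrow> j \<le> m \<Longrightarrow> t i \<le> t j"
  using t_mono[of m t i j] by (cases "i = j") auto

lemma t_pos: "tgood m t \<Longrightarrow> k \<in> {1..m} \<Longrightarrow> t k > 0"
  using t_le[of m t 1 k] unfolding tgood_def by force

lemma sum_heav_prefix:
  fixes l m :: nat and \<omega> t :: "nat \<Rightarrow> real"
  assumes "l \<le> m" "\<And>k. k \<in> {1..m} \<Longrightarrow> heaviside (x - t k) = (if k \<le> l then 1 else 0)"
  shows "\<omega> 0 + (\<Sum>k=1..m. \<omega> k * heaviside (x - t k)) = (\<Sum>k=0..l. \<omega> k)"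
proof -
  have "(\<Sum>k=1..m. \<omega> k * heaviside (x - t k)) = (\<Sum>k\<in>{1..m}. if k \<le> l then \<omega> k else 0)"
    using assms(2) by (intro sum.cong) auto
  also have "\<dots> = (\<Sum>k\<in>{k\<in>{1..m}. k \<le> l}. \<omega> k)" by (rule sum.inter_filter[symmetric]) simp
  also have "{k\<in>{1..m}. k \<le> l} = {1..l}" using assms(1) by auto
  finally show ?thesis by (simp add: sum.atLeast_Suc_atMost)
qed

lemma wfac_eq:
  assumes tg: "tgood m t"
  shows "\<exists>l\<le>m. \<omega> 0 + (\<Sum>k=1..m. \<omega> k * heaviside (x - t k)) = (\<Sum>k=0..l. \<omega> k)"
proof -
  define K where "K = {k\<in>{1..m}. t k < x}"
  define l where "l = (if K = {} then 0 else Max K)"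
  have fK: "finite K" unfolding K_def by simp
  have lm: "l \<le> m" unfolding l_def using fK by (auto simp: K_def)
  have "heaviside (x - t k) = (if k \<le> l then 1 else 0)" if k: "k \<in> {1..m}" for k
  proof (cases "K = {}")
    case True
    then show ?thesis using k by (auto simp: l_def K_def heaviside_def)
  next
    case False
    have MK: "Max K \<in> K" using Max_in[OF fK False] .
    show ?thesis
    proof (cases "k \<le> Max K")
      case True
      then have "t k \<le> t (Max K)" using t_le[OF tg, of k "Max K"] k MK by (auto simp: K_def)
      then show ?thesis using True MK False by (auto simp: l_def K_def heaviside_def)
    next
      case nle: False
      then have "k \<notin> K" using Max_ge[OF fK] by fastforce
      then show ?thesis using nle k False by (auto simp: l_def K_def heaviside_def)
    qed
  qed
  then show ?thesis using lm sum_heav_prefix[of l m x t \<omega>] by blast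
qed

lemma wfac_pos:
  assumes tg: "tgood m t" and l0: "l0 \<le> m"
  shows "\<exists>u v. 0 \<le> u \<and> u < v \<and> (\<forall>x\<in>{u<..<v}. \<omega> 0 + (\<Sum>k=1..m. \<omega> k * heaviside (x - t k)) = (\<Sum>k=0..l0. \<omega> k))"
proof -
  define u where "u = (if l0 = 0 then 0 else t l0)"
  define v where "v = (if l0 = m then u + 1 else t (Suc l0))"
  have u0: "0 \<le> u" unfolding u_def using t_pos[OF tg, of l0] l0 by auto
  have uv: "u < v" unfolding v_def u_def
    using t_mono[OF tg, of l0 "Suc l0"] t_pos[OF tg, of 1] l0 tg unfolding tgood_def by auto
  have "\<omega> 0 + (\<Sum>k=1..m. \<omega> k * heaviside (x - t k)) = (\<Sum>k=0..l0. \<omega> k)" if x: "x \<in> {u<..<v}" for x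
  proof (rule sum_heav_prefix[OF l0])
    fix k assume k: "k \<in> {1..m}"
    show "heaviside (x - t k) = (if k \<le> l0 then 1 else 0)"
    proof (cases "k \<le> l0")
      case True
      then have "t k \<le> u" unfolding u_def using t_le[OF tg, of k l0] k l0 by auto
      then show ?thesis using True x by (auto simp: heaviside_def)
    next
      case False
      then have "l0 \<noteq> m" "v \<le> t k" unfolding v_def using t_le[OF tg, of "Suc l0" k] k by auto
      then show ?thesis using False x by (auto simp: heaviside_def)
    qed
  qed
  then show ?thesis using u0 uv by blast
qed

lemma gw_pos: "x > 0 \<Longrightarrow> gw a x > 0" by (simp add: gw_def)

lemma pdf_weight:
  assumes a: "a > -1" and tg: "tgood m t" and wg: "wgood m \<omega>"
  shows "pdf (Lw (lweight a \<omega> m t))"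
proof -
  have t0: "\<forall>k\<in>{1..m}. t k \<ge> 0" using t_pos[OF tg] by (simp add: less_imp_le)
  have sp: "Lw (lweight a \<omega> m t) p = \<omega> 0 * Ic a 0 p + (\<Sum>k=1..m. \<omega> k * Ic a (t k) p)" for p
    by (rule Lw_split[OF a t0])
  have li: "\<And>c. c \<ge> 0 \<Longrightarrow> linf (Ic a c)" using Ic_linf[OF a] .
  interpret linf "Lw (lweight a \<omega> m t)"
    by unfold_locales
       (auto simp: sp linf.L_add[OF li] linf.L_smult[OF li] t0 sum.distrib sum_distrib_left algebra_simps)
  show ?thesis
  proof unfold_locales
    fix p :: "real poly" assume p: "p \<noteq> 0"
    define g where "g x = indicator {0<..} x *\<^sub>R (poly (p * p) x * lweight a \<omega> m t x)" for x
    have ig: "integrable lborel g" unfolding g_def by (rule Lw_integrable[OF a t0])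
    have fac: "0 \<le> \<omega> 0 + (\<Sum>k=1..m. \<omega> k * heaviside (x - t k))" for x
      using wfac_eq[OF tg, of \<omega> x] wg unfolding wgood_def by auto
    have gnn: "0 \<le> g x" for x
      using fac[of x] gw_pos[of x a]
      by (auto simp: g_def lweight_def indicator_def gw_def intro!: mult_nonneg_nonneg)
    have L: "Lw (lweight a \<omega> m t) (p * p) = integral\<^sup>L lborel g"
      unfolding Lw_def set_lebesgue_integral_def g_def ..
    have "integral\<^sup>L lborel g \<noteq> 0"
    proof
      assume "integral\<^sup>L lborel g = 0"
      then have ae: "AE x in lborel. g x = 0"
        using integral_nonneg_eq_0_iff_AE[OF ig] gnn by auto
      obtain l0 where l0: "l0 \<le> m" "(\<Sum>k=0..l0. \<omega> k) > 0" using wg unfolding wgood_def by blast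
      obtain u v where uv: "0 \<le> u" "u < v"
        and fu: "\<forall>x\<in>{u<..<v}. \<omega> 0 + (\<Sum>k=1..m. \<omega> k * heaviside (x - t k)) = (\<Sum>k=0..l0. \<omega> k)"
        using wfac_pos[OF tg l0(1)] by blast
      have fr: "finite {x. poly p x = 0}" using poly_roots_finite[OF p] .
      have ae2: "AE x in lborel. x \<notin> {x. poly p x = 0}"
        by (rule AE_not_in[OF finite_imp_null_set_lborel[OF fr]])
      have "AE x in lborel. x \<notin> {u<..<v}"
        using ae ae2
      proof eventually_elim
        case (elim x)
        show ?case
        proof
          assume x: "x \<in> {u<..<v}"
          then have x0: "x > 0" using uv by auto
          have "g x = (poly p x)^2 * gw a x * (\<Sum>k=0..l0. \<omega> k)"
            using fu x x0 by (simp add: g_def lweight_def gw_def power2_eq_square)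
          moreover have "(poly p x)^2 * gw a x * (\<Sum>k=0..l0. \<omega> k) > 0"
            using elim(2) gw_pos[OF x0, of a] l0(2) by auto
          ultimately show False using elim(1) by linarith
        qed
      qed
      then have "emeasure lborel {u<..<v} = 0"
        by (subst (asm) AE_iff_measurable[of "{u<..<v}"]) auto
      then show False using uv by simp
    qed
    moreover have "integral\<^sup>L lborel g \<ge> 0" using gnn by simp
    ultimately show "Lw (lweight a \<omega> m t) (p * p) > 0" using L by simp
  qed
qed


lemma ev_good:
  assumes tg: "tgood m t" and k: "k \<in> {1..m}"
  shows "eventually (\<lambda>s. s > 0 \<and> tgood m (t(k := s))) (nhds (t k))"
proof -
  define lo where "lo = (if k = 1 then 0 else t (k - 1))"
  define hi where "hi = (if k = m then t k + 1 else t (Suc k))"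
  have lo: "lo < t k" unfolding lo_def using t_pos[OF tg k] t_mono[OF tg, of "k - 1" k] k by auto
  have hi: "t k < hi" unfolding hi_def using t_mono[OF tg, of k "Suc k"] k by auto
  have "eventually (\<lambda>s. s \<in> {lo<..<hi}) (nhds (t k))"
    using lo hi by (intro eventually_nhds_in_open) auto
  then show ?thesis
  proof eventually_elim
    case (elim s)
    have lo0: "lo \<ge> 0" unfolding lo_def using t_pos[OF tg, of "k - 1"] k by (auto simp: less_imp_le)
    then have s0: "s > 0" using elim by auto
    have "0 < (t(k := s)) 1" using tg s0 unfolding tgood_def by auto
    moreover have "(t(k := s)) j < (t(k := s)) (Suc j)" if j: "j \<in> {1..<m}" for j
    proof -
      consider "j = k" | "Suc j = k" | "j \<noteq> k" "Suc j \<noteq> k" by blast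
      then show ?thesis
      proof cases
        case 1 then show ?thesis using elim j by (auto simp: hi_def)
      next
        case 2 then show ?thesis using elim j by (auto simp: lo_def)
      next
        case 3 then show ?thesis using tg j unfolding tgood_def by auto
      qed
    qed
    ultimately show ?case using s0 unfolding tgood_def by auto
  qed
qed

lemma linf_comb:
  assumes "\<And>j. j \<in> A \<Longrightarrow> linf (F j)" "linf L0"
  shows "linf (\<lambda>p. L0 p + (\<Sum>j\<in>A. w j * F j p))"
proof
  fix p q
  have "(\<Sum>j\<in>A. w j * F j (p + q)) = (\<Sum>j\<in>A. w j * F j p + w j * F j q)"
    using assms(1) by (intro sum.cong) (auto simp: linf.L_add algebra_simps)
  then show "L0 (p + q) + (\<Sum>j\<in>A. w j * F j (p + q)) = L0 p + (\<Sum>j\<in>A. w j * F j p) + (L0 q + (\<Sum>j\<in>A. w j * F j q))"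
    using assms(2) by (simp add: linf.L_add sum.distrib)
next
  fix c p
  have "(\<Sum>j\<in>A. w j * F j (smult c p)) = (\<Sum>j\<in>A. c * (w j * F j p))"
    using assms(1) by (intro sum.cong) (auto simp: linf.L_smult algebra_simps)
  then show "L0 (smult c p) + (\<Sum>j\<in>A. w j * F j (smult c p)) = c * (L0 p + (\<Sum>j\<in>A. w j * F j p))"
    using assms(2) by (simp add: linf.L_smult sum_distrib_left algebra_simps)
qed

definition LK where
  "LK a \<omega> m t k s = Lw (lweight a \<omega> m (t(k := max s 0)))"

definition LK' where
  "LK' a \<omega> t k p = - (\<omega> k * (poly p (t k) * gw a (t k)))"

lemma LK_split:
  assumes a: "a > -1" and tg: "tgood m t" and k: "k \<in> {1..m}"
  shows "LK a \<omega> m t k s p = \<omega> 0 * Ic a 0 p + (\<Sum>j=1..m. \<omega> j * Ic a ((t(k := max s 0)) j) p)"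
  unfolding LK_def using t_pos[OF tg] by (intro Lw_split[OF a]) (auto simp: less_imp_le)

lemma fam_k:
  assumes a: "a > -1" and tg: "tgood m t" and wg: "wgood m \<omega>" and k: "k \<in> {1..m}"
  shows "fam (LK a \<omega> m t k) (LK' a \<omega> t k) (t k)"
proof (rule fam.intro)
  have li: "\<And>c. c \<ge> 0 \<Longrightarrow> linf (Ic a c)" using Ic_linf[OF a] .
  have t0: "\<And>j s. j \<in> {1..m} \<Longrightarrow> (t(k := max s 0)) j \<ge> 0" using t_pos[OF tg] by (auto simp: less_imp_le)
  show "linf (LK a \<omega> m t k s)" for s
  proof -
    have "linf (\<lambda>p. \<omega> 0 * Ic a 0 p + (\<Sum>j=1..m. \<omega> j * Ic a ((t(k := max s 0)) j) p))"
    proof (rule linf_comb)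
      show "linf (\<lambda>p. \<omega> 0 * Ic a 0 p)" using li[of 0] by (auto simp: linf_def algebra_simps)
      show "linf (Ic a ((t(k := max s 0)) j))" if "j \<in> {1..m}" for j using li[OF t0[OF that]] .
    qed
    moreover have "LK a \<omega> m t k s = (\<lambda>p. \<omega> 0 * Ic a 0 p + (\<Sum>j=1..m. \<omega> j * Ic a ((t(k := max s 0)) j) p))"
      using LK_split[OF a tg k] by (rule ext)
    ultimately show ?thesis by simp
  qed
  show "linf (LK' a \<omega> t k)" by unfold_locales (auto simp: LK'_def algebra_simps)
  show "((\<lambda>s. LK a \<omega> m t k s p) has_real_derivative LK' a \<omega> t k p) (at (t k))" for p
  proof -
    have tk: "t k > 0" using t_pos[OF tg k] .
    have dj: "((\<lambda>s. \<omega> j * Ic a ((t(k := max s 0)) j) p) has_real_derivative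
        (if j = k then LK' a \<omega> t k p else 0)) (at (t k))" if j: "j \<in> {1..m}" for j
    proof (cases "j = k")
      case True
      have ev: "eventually (\<lambda>s. \<omega> j * Ic a ((t(k := max s 0)) j) p = \<omega> k * Ic a s p) (nhds (t k))"
      proof -
        have "eventually (\<lambda>s. s \<in> {0<..}) (nhds (t k))" using tk by (intro eventually_nhds_in_open) auto
        then show ?thesis by eventually_elim (use True in auto)
      qed
      show ?thesis
        by (subst DERIV_cong_ev[OF refl ev refl])
           (use DERIV_cmult[OF Ic_deriv[OF a tk, of p], of "\<omega> k"] True in \<open>simp add: LK'_def\<close>)
    next
      case False
      then show ?thesis by simp
    qed
    have "((\<lambda>s. \<omega> 0 * Ic a 0 p + (\<Sum>j=1..m. \<omega> j * Ic a ((t(k := max s 0)) j) p)) has_real_derivative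
        0 + (\<Sum>j=1..m. if j = k then LK' a \<omega> t k p else 0)) (at (t k))"
      by (intro DERIV_add DERIV_const DERIV_sum dj) auto
    moreover have "(\<Sum>j=1..m. if j = k then LK' a \<omega> t k p else 0) = LK' a \<omega> t k p"
      using k by simp
    ultimately show ?thesis by (simp add: LK_split[OF a tg k])
  qed
  show "eventually (\<lambda>s. pdf (LK a \<omega> m t k s)) (nhds (t k))"
    using ev_good[OF tg k] by eventually_elim (auto simp: LK_def intro!: pdf_weight[OF a _ wg])
qed

lemma LK_at: "tgood m t \<Longrightarrow> k \<in> {1..m} \<Longrightarrow> LK a \<omega> m t k (t k) = Lw (lweight a \<omega> m t)"
  using t_pos[of m t k] by (simp add: LK_def less_imp_le max_def)

lemma ev_LK:
  assumes tg: "tgood m t" and k: "k \<in> {1..m}"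
  shows "eventually (\<lambda>s. LK a \<omega> m t k s = Lw (lweight a \<omega> m (t(k := s)))) (nhds (t k))"
  using ev_good[OF tg k] by eventually_elim (auto simp: LK_def max_def)

lemma sum_LK':
  assumes a: "a > -1" and tg: "tgood m t"
  shows "(\<Sum>k=1..m. t k * LK' a \<omega> t k q) = Lw (lweight a \<omega> m t) (Dop a q)"
proof -
  have t0: "\<forall>k\<in>{1..m}. t k \<ge> 0" using t_pos[OF tg] by (simp add: less_imp_le)
  have "Lw (lweight a \<omega> m t) (Dop a q) = \<omega> 0 * Ic a 0 (Dop a q) + (\<Sum>k=1..m. \<omega> k * Ic a (t k) (Dop a q))"
    by (rule Lw_split[OF a t0])
  also have "\<dots> = (\<Sum>k=1..m. \<omega> k * (- (t k powr (a + 1) * exp (- t k) * poly q (t k))))"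
    using a t0 by (simp add: Ic_Dop)
  also have "\<dots> = (\<Sum>k=1..m. t k * LK' a \<omega> t k q)"
  proof (intro sum.cong refl)
    fix k assume "k \<in> {1..m}"
    then have "t k > 0" using t_pos[OF tg] by blast
    then have "t k powr (a + 1) = t k * t k powr a" by (simp add: powr_add)
    then show "\<omega> k * (- (t k powr (a + 1) * exp (- t k) * poly q (t k))) = t k * LK' a \<omega> t k q"
      by (simp add: LK'_def gw_def)
  qed
  finally show ?thesis by simp
qed


lemma DERIV_ln_div:
  assumes f: "(f has_real_derivative f') (at x)" and g: "(g has_real_derivative g') (at x)"
    and fp: "f x > 0" and gp: "g x > 0"
  shows "((\<lambda>s. ln (f s / g s)) has_real_derivative (f' / f x - g' / g x)) (at x)"
proof -
  have q: "((\<lambda>s. f s / g s) has_real_derivative (f' * g x - f x * g') / (g x * g x)) (at x)"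
    using DERIV_divide[OF f g] gp by simp
  have "((\<lambda>s. ln (f s / g s)) has_real_derivative inverse (f x / g x) * ((f' * g x - f x * g') / (g x * g x))) (at x)"
    by (rule DERIV_chain2[OF DERIV_ln q]) (use fp gp in simp)
  moreover have "inverse (f x / g x) * ((f' * g x - f x * g') / (g x * g x)) = f' / f x - g' / g x"
    using fp gp by (simp add: field_simps)
  ultimately show ?thesis by simp
qed

theorem proposition2p9:
  fixes m :: nat and a :: real and t \<omega> :: "nat \<Rightarrow> real"
  assumes "m \<ge> 1" and "a > -1"
    and "0 < t 1" and "\<forall>k\<in>{1..<m}. t k < t (Suc k)"
    and "\<forall>l\<le>m. (\<Sum>k=0..l. \<omega> k) \<ge> 0"
    and "\<exists>l\<le>m. (\<Sum>k=0..l. \<omega> k) > 0"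
  shows
    "(\<forall>n\<ge>1. \<exists>d :: nat \<Rightarrow> real.
        (\<forall>k\<in>{1..m}. ((\<lambda>s. ln (rec_beta (lweight a \<omega> m (t(k := s))) n))
                          has_real_derivative d k) (at (t k))) \<and>
        (\<Sum>k=1..m. t k * d k) =
          rec_alpha (lweight a \<omega> m t) (n - 1) - rec_alpha (lweight a \<omega> m t) n + 2)
   \<and> (\<forall>n. \<exists>d :: nat \<Rightarrow> real.
        (\<forall>k\<in>{1..m}. ((\<lambda>s. rec_alpha (lweight a \<omega> m (t(k := s))) n)
                          has_real_derivative d k) (at (t k))) \<and>
        (\<Sum>k=1..m. t k * d k) - rec_alpha (lweight a \<omega> m t) n =
          rec_beta (lweight a \<omega> m t) n - rec_beta (lweight a \<omega> m t) (Suc n))"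
proof -
  have a: "a > -1" by fact
  have tg: "tgood m t" using assms(3,4) by (simp add: tgood_def)
  have wg: "wgood m \<omega>" using assms(5,6) by (simp add: wgood_def)
  define L0 where "L0 = Lw (lweight a \<omega> m t)"
  have pL0: "pdf L0" using pdf_weight[OF a tg wg] by (simp add: L0_def)
  interpret p0: pdf L0 by (rule pL0)
  have Lat: "LK a \<omega> m t k (t k) = L0" if "k \<in> {1..m}" for k
    using LK_at[OF tg that] by (simp add: L0_def)
  have ra: "rec_alpha (lweight a \<omega> m t) n = aa L0 n" for n
    using rec_alpha_eq[OF pL0[unfolded L0_def]] by (simp add: L0_def)
  have rb: "rec_beta (lweight a \<omega> m t) n = bb L0 n" for n
    using rec_beta_eq[OF pL0[unfolded L0_def]] by (simp add: L0_def)
  have evs: "eventually (\<lambda>s. LK a \<omega> m t k s = Lw (lweight a \<omega> m (t(k := s))) \<and> pdf (LK a \<omega> m t k s)) (nhds (t k))"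
    if k: "k \<in> {1..m}" for k
    using ev_LK[OF tg k] fam.ev[OF fam_k[OF a tg wg k]] by eventually_elim auto
  have SD: "(\<Sum>k=1..m. t k * LK' a \<omega> t k q) = L0 (Dop a q)" for q
    using sum_LK'[OF a tg] by (simp add: L0_def)
  have part1: "\<exists>d :: nat \<Rightarrow> real.
        (\<forall>k\<in>{1..m}. ((\<lambda>s. ln (rec_beta (lweight a \<omega> m (t(k := s))) n))
                          has_real_derivative d k) (at (t k))) \<and>
        (\<Sum>k=1..m. t k * d k) =
          rec_alpha (lweight a \<omega> m t) (n - 1) - rec_alpha (lweight a \<omega> m t) n + 2"
    if n: "n \<ge> 1" for n
  proof -
    define P where "P = OP L0 n"
    define Q where "Q = OP L0 (n - 1)"
    define d where "d k = LK' a \<omega> t k (P * P) / hh L0 n - LK' a \<omega> t k (Q * Q) / hh L0 (n - 1)" for k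
    have D: "((\<lambda>s. ln (rec_beta (lweight a \<omega> m (t(k := s))) n)) has_real_derivative d k) (at (t k))"
      if k: "k \<in> {1..m}" for k
    proof -
      interpret F: fam "LK a \<omega> m t k" "LK' a \<omega> t k" "t k" by (rule fam_k[OF a tg wg k])
      have D1: "((\<lambda>s. ln (hh (LK a \<omega> m t k s) n / hh (LK a \<omega> m t k s) (n - 1))) has_real_derivative d k) (at (t k))"
        using DERIV_ln_div[OF F.hh_deriv[of n] F.hh_deriv[of "n - 1"]] p0.hh_pos
        by (simp add: Lat[OF k] d_def P_def Q_def)
      have ev: "eventually (\<lambda>s. ln (rec_beta (lweight a \<omega> m (t(k := s))) n) =
          ln (hh (LK a \<omega> m t k s) n / hh (LK a \<omega> m t k s) (n - 1))) (nhds (t k))"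
        using evs[OF k]
      proof eventually_elim
        case (elim s)
        then have "rec_beta (lweight a \<omega> m (t(k := s))) n = bb (LK a \<omega> m t k s) n"
          using rec_beta_eq[of "lweight a \<omega> m (t(k := s))" n] by metis
        then show ?case using n by (simp add: bb_def)
      qed
      show ?thesis by (subst DERIV_cong_ev[OF refl ev refl]) (rule D1)
    qed
    have "(\<Sum>k=1..m. t k * d k) = L0 (Dop a (P * P)) / hh L0 n - L0 (Dop a (Q * Q)) / hh L0 (n - 1)"
      unfolding d_def SD[symmetric]
      by (simp add: right_diff_distrib sum_subtractf sum_divide_distrib)
    also have "\<dots> = (a + 1 + 2 * real n - aa L0 n) - (a + 1 + 2 * real (n - 1) - aa L0 (n - 1))"
      using p0.T1[of a n] p0.T1[of a "n - 1"] p0.hh_pos[of n] p0.hh_pos[of "n - 1"]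
      by (simp add: P_def Q_def)
    also have "\<dots> = aa L0 (n - 1) - aa L0 n + 2" using n by (simp add: of_nat_diff)
    finally have S: "(\<Sum>k=1..m. t k * d k) = aa L0 (n - 1) - aa L0 n + 2" .
    show ?thesis unfolding ra using D S by blast
  qed
  have part2: "\<exists>d :: nat \<Rightarrow> real.
        (\<forall>k\<in>{1..m}. ((\<lambda>s. rec_alpha (lweight a \<omega> m (t(k := s))) n)
                          has_real_derivative d k) (at (t k))) \<and>
        (\<Sum>k=1..m. t k * d k) - rec_alpha (lweight a \<omega> m t) n =
          rec_beta (lweight a \<omega> m t) n - rec_beta (lweight a \<omega> m t) (Suc n)" for n
  proof -
    define P where "P = OP L0 n"
    define R where "R = OP L0 (Suc n)"
    define Q where "Q = OPm L0 n"
    define d where "d k = LK' a \<omega> t k (P * R) / hh L0 n - LK' a \<omega> t k (Q * P) / hh L0 (n - 1)" for k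
    have D: "((\<lambda>s. rec_alpha (lweight a \<omega> m (t(k := s))) n) has_real_derivative d k) (at (t k))"
      if k: "k \<in> {1..m}" for k
    proof -
      interpret F: fam "LK a \<omega> m t k" "LK' a \<omega> t k" "t k" by (rule fam_k[OF a tg wg k])
      have D1: "((\<lambda>s. aa (LK a \<omega> m t k s) n) has_real_derivative d k) (at (t k))"
        using F.aa_deriv[of n] by (simp add: Lat[OF k] d_def P_def Q_def R_def)
      have ev: "eventually (\<lambda>s. rec_alpha (lweight a \<omega> m (t(k := s))) n = aa (LK a \<omega> m t k s) n) (nhds (t k))"
        using evs[OF k]
      proof eventually_elim
        case (elim s)
        then show ?case using rec_alpha_eq[of "lweight a \<omega> m (t(k := s))" n] by metis
      qed
      show ?thesis by (subst DERIV_cong_ev[OF refl ev refl]) (rule D1)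
    qed
    have "(\<Sum>k=1..m. t k * d k) = L0 (Dop a (P * R)) / hh L0 n - L0 (Dop a (Q * P)) / hh L0 (n - 1)"
      unfolding d_def SD[symmetric]
      by (simp add: right_diff_distrib sum_subtractf sum_divide_distrib)
    also have "L0 (Dop a (P * R)) / hh L0 n = - coeff R n - bb L0 (Suc n)"
      using p0.T2[of a n] p0.hh_pos[of n] by (simp add: P_def R_def bb_def field_simps)
    also have "L0 (Dop a (Q * P)) / hh L0 (n - 1) = - pc L0 n - bb L0 n"
    proof (cases n)
      case 0
      then show ?thesis by (simp add: Q_def Dop_def pc_def bb_def)
    next
      case (Suc j)
      then show ?thesis
        using p0.T2[of a j] p0.hh_pos[of j] by (simp add: P_def Q_def pc_def bb_def field_simps)
    qed
    finally have "(\<Sum>k=1..m. t k * d k) = - coeff R n - bb L0 (Suc n) - (- pc L0 n - bb L0 n)" .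
    moreover have "aa L0 n = pc L0 n - coeff R n" unfolding R_def by (rule aa_pc)
    ultimately have "(\<Sum>k=1..m. t k * d k) - aa L0 n = bb L0 n - bb L0 (Suc n)" by simp
    then show ?thesis unfolding ra rb using D by blast
  qed
  show ?thesis using part1 part2 by blast
qed


end
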